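(* The push-based remote control problem described in the context is equivalent to the single-agent POMDP $\hat{\mathcal{M}}$ described in the context: (after the encoder's decision at time $0$) deterministic pairs of encoder and decoder policies correspond to deterministic policies of $\hat{\mathcal{M}}$ with equal expected discounted objective, so that the optimal push-based policies are obtained from the optimal policy of $\hat{\mathcal{M}}$, $\hat{\boldsymbol{\pi}}^*_{\text{joint}}=\arg\max_{\hat{\boldsymbol{\pi}}:\Omega\to\hat{\mathcal{A}}}\sum_{t=0}^\infty\gamma^t\,\mathbb{E}_{\boldsymbol{\omega}_0,\hat{\boldsymbol{\pi}}}\big[\hat r(s_t,\hat{\boldsymbol{\pi}}(\boldsymbol{\omega}_t))\big]$, by splitting each chosen action $\langle a,\mathbf{c}\rangle$ into the decoder's control action $a$ and the encoder's communication decisions $\mathbf{c}$.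
   Context: Push-based problem: finite state set $\mathcal{S}$, finite control action set $\mathcal{A}$, stochastic matrices $\mathbf{P}^a$ ($a\in\mathcal{A}$) with $P^a_{s,s'}$ the probability of moving from $s$ to $s'$ under $a$, reward $r(s,a,s')$, discount $\gamma\in[0,1)$, communication cost $\beta>0$. A Markov process evolves as $s_{t+1}\sim P^{a_t}_{s_t,\cdot}$. At each time $t$ an encoder, observing $s_t$ and the past decoder observations, chooses $c_t\in\{0,1\}$; the decoder observes $o_t=s_t$ if $c_t=1$ and $o_t=\chi$ otherwise, then chooses $a_t\in\mathcal{A}$ based on $o_{0:t}$ (and its past actions). The objective is to maximize $\mathbb{E}\big[\sum_t\gamma^t(r(s_t,a_t,s_{t+1})-\beta c_t)\big]$ over deterministic encoder and decoder policies; the encoder's decision at time $0$ is optimized separately. POMDP $\hat{\mathcal{M}}$: hidden state space $\mathcal{S}$; observation space $\mathcal{S}\cup\{\chi\}$; action space $\hat{\mathcal{A}}=\mathcal{A}\times\{0,1\}^{|\mathcal{S}|}$, where an action $\langle a,\mathbf{c}\rangle$ consists of a decoder control action $a$ and an encoder communication decision $\mathbf{c}_{s}\in\{0,1\}$ for every possible next state $s$; transition $\Pr(s_{t+1}=s'\mid s_t=s,\langle a,\mathbf{c}\rangle)=P^a_{s,s'}$; after moving to $s'$ the observation is $s'$ if $\mathbf{c}_{s'}=1$ and $\chi$ if $\mathbf{c}_{s'}=0$; reward $\hat r(s,\langle a,\mathbf{c}\rangle)=\sum_{s'\in\mathcal{S}}P^a_{s,s'}\big(r(s,a,s')-\gamma\beta\,\mathbf{c}_{s'}\big)$.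 $\Omega$ is the probability simplex over $\mathcal{S}$ (beliefs), $\boldsymbol{\omega}_t$ is the belief at time $t$ and $\boldsymbol{\omega}_0$ the decoder's initial belief. *)

theory Defs
  imports Complex_Main
begin

text \<open>
  A transition kernel is P :: 'a => 's => 's => real, with P a s s' the probability
  of moving from s to s' under a.  The decoder observation "chi" (no transmission)
  is None, a transmitted state s is Some s.  Histories are the decoder observations
  o_1, ..., o_t after time 0 (chronological list); the time-0 observation o_0 is
  already absorbed into the decoder's initial belief omega_0, the initial state
  s_0 being distributed according to omega_0.
\<close>

type_synonym 's obs_hist = "'s option list"

definition stochastic :: "('a \<Rightarrow> 's::finite \<Rightarrow> 's \<Rightarrow> real) \<Rightarrow> bool" where
  "stochastic P \<longleftrightarrow> (\<forall>a s. (\<forall>s'. 0 \<le> P a s s') \<and> (\<Sum>s'\<in>UNIV. P a s s') = 1)"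

definition belief_simplex :: "('s::finite \<Rightarrow> real) set" where
  "belief_simplex = {\<omega>. (\<forall>s. 0 \<le> \<omega> s) \<and> (\<Sum>s\<in>UNIV. \<omega> s) = 1}"

text \<open>Encoder: enc h s = c_t, where h = o_1..o_(t-1) are the past decoder observations and
  s = s_t the current state.  Decoder: dec h = a_t, where h = o_1..o_t.\<close>

definition obs_of :: "bool \<Rightarrow> 's \<Rightarrow> 's option" where
  "obs_of c s = (if c then Some s else None)"

text \<open>push_val_from P r beta enc dec t h s: expected reward r(s_k,a_k,s_(k+1)) - beta c_k
  at t steps after a time k0 >= 1 at which the process is in state s (not yet
  encoded), the past decoder observations being h.\<close>

fun push_val_from ::
  "('a \<Rightarrow> 's::finite \<Rightarrow> 's \<Rightarrow> real) \<Rightarrow> ('s \<Rightarrow> 'a \<Rightarrow> 's \<Rightarrow> real) \<Rightarrow> real \<Rightarrow>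
   ('s obs_hist \<Rightarrow> 's \<Rightarrow> bool) \<Rightarrow> ('s obs_hist \<Rightarrow> 'a) \<Rightarrow> nat \<Rightarrow> 's obs_hist \<Rightarrow> 's \<Rightarrow> real" where
  "push_val_from P r \<beta> enc dec 0 h s =
     (let c = enc h s; h' = h @ [obs_of c s]; a = dec h' in
        (\<Sum>s'\<in>UNIV. P a s s' * r s a s') - \<beta> * (if c then 1 else 0))"
| "push_val_from P r \<beta> enc dec (Suc t) h s =
     (let c = enc h s; h' = h @ [obs_of c s]; a = dec h' in
        (\<Sum>s'\<in>UNIV. P a s s' * push_val_from P r \<beta> enc dec t h' s'))"

text \<open>Expected reward at time t, starting at time 0 in state s (the time-0
  communication decision has already been made; its cost is not included).\<close>

fun push_val ::
  "('a \<Rightarrow> 's::finite \<Rightarrow> 's \<Rightarrow> real) \<Rightarrow> ('s \<Rightarrow> 'a \<Rightarrow> 's \<Rightarrow> real) \<Rightarrow> real \<Rightarrow>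
   ('s obs_hist \<Rightarrow> 's \<Rightarrow> bool) \<Rightarrow> ('s obs_hist \<Rightarrow> 'a) \<Rightarrow> nat \<Rightarrow> 's \<Rightarrow> real" where
  "push_val P r \<beta> enc dec 0 s = (\<Sum>s'\<in>UNIV. P (dec []) s s' * r s (dec []) s')"
| "push_val P r \<beta> enc dec (Suc t) s =
     (\<Sum>s'\<in>UNIV. P (dec []) s s' * push_val_from P r \<beta> enc dec t [] s')"

definition push_objective ::
  "('a \<Rightarrow> 's::finite \<Rightarrow> 's \<Rightarrow> real) \<Rightarrow> ('s \<Rightarrow> 'a \<Rightarrow> 's \<Rightarrow> real) \<Rightarrow> real \<Rightarrow> real \<Rightarrow>
   ('s \<Rightarrow> real) \<Rightarrow> ('s obs_hist \<Rightarrow> 's \<Rightarrow> bool) \<Rightarrow> ('s obs_hist \<Rightarrow> 'a) \<Rightarrow> real" where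
  "push_objective P r \<gamma> \<beta> \<omega>0 enc dec =
     (\<Sum>t. \<gamma> ^ t * (\<Sum>s\<in>UNIV. \<omega>0 s * push_val P r \<beta> enc dec t s))"

text \<open>An action of hat M is a pair (a, c) with c :: 's => bool the communication
  decision for every possible next state.\<close>

definition rhat ::
  "('a \<Rightarrow> 's::finite \<Rightarrow> 's \<Rightarrow> real) \<Rightarrow> ('s \<Rightarrow> 'a \<Rightarrow> 's \<Rightarrow> real) \<Rightarrow> real \<Rightarrow> real \<Rightarrow>
   's \<Rightarrow> 'a \<times> ('s \<Rightarrow> bool) \<Rightarrow> real" where
  "rhat P r \<gamma> \<beta> s ac =
     (\<Sum>s'\<in>UNIV. P (fst ac) s s' * (r s (fst ac) s' - \<gamma> * \<beta> * (if snd ac s' then 1 else 0)))"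

fun pomdp_val ::
  "('a \<Rightarrow> 's::finite \<Rightarrow> 's \<Rightarrow> real) \<Rightarrow> ('s \<Rightarrow> 'a \<Rightarrow> 's \<Rightarrow> real) \<Rightarrow> real \<Rightarrow> real \<Rightarrow>
   ('s obs_hist \<Rightarrow> 'a \<times> ('s \<Rightarrow> bool)) \<Rightarrow> nat \<Rightarrow> 's obs_hist \<Rightarrow> 's \<Rightarrow> real" where
  "pomdp_val P r \<gamma> \<beta> \<pi> 0 h s = rhat P r \<gamma> \<beta> s (\<pi> h)"
| "pomdp_val P r \<gamma> \<beta> \<pi> (Suc t) h s =
     (let (a, c) = \<pi> h in
        (\<Sum>s'\<in>UNIV. P a s s' * pomdp_val P r \<gamma> \<beta> \<pi> t (h @ [obs_of (c s') s']) s'))"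

definition pomdp_objective ::
  "('a \<Rightarrow> 's::finite \<Rightarrow> 's \<Rightarrow> real) \<Rightarrow> ('s \<Rightarrow> 'a \<Rightarrow> 's \<Rightarrow> real) \<Rightarrow> real \<Rightarrow> real \<Rightarrow>
   ('s \<Rightarrow> real) \<Rightarrow> ('s obs_hist \<Rightarrow> 'a \<times> ('s \<Rightarrow> bool)) \<Rightarrow> real" where
  "pomdp_objective P r \<gamma> \<beta> \<omega>0 \<pi> =
     (\<Sum>t. \<gamma> ^ t * (\<Sum>s\<in>UNIV. \<omega>0 s * pomdp_val P r \<gamma> \<beta> \<pi> t [] s))"

text \<open>Bayesian belief update after action (a,c) and observation ob.  (If the
  observation has probability zero the result is irrelevant.)\<close>

definition belief_update ::
  "('a \<Rightarrow> 's::finite \<Rightarrow> 's \<Rightarrow> real) \<Rightarrow> ('s \<Rightarrow> real) \<Rightarrow> 'a \<times> ('s \<Rightarrow> bool) \<Rightarrow> 's option \<Rightarrow> ('s \<Rightarrow> real)" where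
  "belief_update P \<omega> ac ob =
     (case ob of
        Some s' \<Rightarrow> (\<lambda>x. if x = s' then 1 else 0)
      | None \<Rightarrow>
          (let q = (\<lambda>s'. (\<Sum>s\<in>UNIV. \<omega> s * P (fst ac) s s') * (if snd ac s' then 0 else 1))
           in (\<lambda>s'. q s' / (\<Sum>x\<in>UNIV. q x))))"

definition belief_of ::
  "('a \<Rightarrow> 's::finite \<Rightarrow> 's \<Rightarrow> real) \<Rightarrow> ('s \<Rightarrow> real) \<Rightarrow> (('s \<Rightarrow> real) \<Rightarrow> 'a \<times> ('s \<Rightarrow> bool)) \<Rightarrow>
   's obs_hist \<Rightarrow> ('s \<Rightarrow> real)" where
  "belief_of P \<omega>0 \<pi>b h = foldl (\<lambda>\<omega> ob. belief_update P \<omega> (\<pi>b \<omega>) ob) \<omega>0 h"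

definition belief_policy ::
  "('a \<Rightarrow> 's::finite \<Rightarrow> 's \<Rightarrow> real) \<Rightarrow> ('s \<Rightarrow> real) \<Rightarrow> (('s \<Rightarrow> real) \<Rightarrow> 'a \<times> ('s \<Rightarrow> bool)) \<Rightarrow>
   ('s obs_hist \<Rightarrow> 'a \<times> ('s \<Rightarrow> bool))" where
  "belief_policy P \<omega>0 \<pi>b = (\<lambda>h. \<pi>b (belief_of P \<omega>0 \<pi>b h))"

definition join_policy ::
  "('s obs_hist \<Rightarrow> 's \<Rightarrow> bool) \<Rightarrow> ('s obs_hist \<Rightarrow> 'a) \<Rightarrow> ('s obs_hist \<Rightarrow> 'a \<times> ('s \<Rightarrow> bool))" where
  "join_policy enc dec = (\<lambda>h. (dec h, enc h))"

definition split_enc :: "('s obs_hist \<Rightarrow> 'a \<times> ('s \<Rightarrow> bool)) \<Rightarrow> ('s obs_hist \<Rightarrow> 's \<Rightarrow> bool)" where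
  "split_enc \<pi> = (\<lambda>h s. snd (\<pi> h) s)"

definition split_dec :: "('s obs_hist \<Rightarrow> 'a \<times> ('s \<Rightarrow> bool)) \<Rightarrow> ('s obs_hist \<Rightarrow> 'a)" where
  "split_dec \<pi> = (\<lambda>h. fst (\<pi> h))"

end

theory Submission
  imports Defs
begin


lemma geo_summable:
  fixes \<gamma> :: real
  assumes "0 \<le> \<gamma>" "\<gamma> < 1" "\<And>t. \<bar>f t\<bar> \<le> C"
  shows "summable (\<lambda>t. \<gamma>^t * f t)"
proof (rule summable_comparison_test'[where g="\<lambda>t. C * \<gamma>^t" and N=0])
  show "summable (\<lambda>t. C * \<gamma>^t)" using assms by (intro summable_mult summable_geometric) auto
  fix n show "norm (\<gamma>^n * f n) \<le> C * \<gamma>^n"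
    using assms(3)[of n] assms(1) by (simp add: abs_mult mult.commute mult_right_mono)
qed

lemma geo_bound:
  fixes \<gamma> :: real
  assumes "0 \<le> \<gamma>" "\<gamma> < 1" "\<And>t. \<bar>f t\<bar> \<le> C"
  shows "\<bar>\<Sum>t. \<gamma>^t * f t\<bar> \<le> C / (1 - \<gamma>)"
proof -
  have s1: "summable (\<lambda>t. C * \<gamma>^t)" using assms by (intro summable_mult summable_geometric) auto
  have le: "\<bar>\<gamma>^t * f t\<bar> \<le> C * \<gamma>^t" for t
    using assms(3)[of t] assms(1) by (simp add: abs_mult mult.commute mult_right_mono)
  have s2: "summable (\<lambda>t. \<bar>\<gamma>^t * f t\<bar>)"
    by (rule summable_comparison_test'[OF s1, of 0]) (use le in auto)
  have "\<bar>\<Sum>t. \<gamma>^t * f t\<bar> \<le> (\<Sum>t. \<bar>\<gamma>^t * f t\<bar>)" by (rule summable_rabs[OF s2])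
  also have "\<dots> \<le> (\<Sum>t. C * \<gamma>^t)" by (rule suminf_le[OF le s2 s1])
  also have "\<dots> = C / (1 - \<gamma>)" using assms by (simp add: suminf_mult suminf_geometric)
  finally show ?thesis .
qed

lemma fin_bound: fixes f :: "'x::finite \<Rightarrow> real" shows "\<exists>C. \<forall>x. \<bar>f x\<bar> \<le> C"
  by (rule exI[of _ "Max (range (\<lambda>x. \<bar>f x\<bar>))"]) (auto intro: Max_ge)

lemma avg_bound:
  assumes "stochastic P" "\<And>s'. \<bar>x s'\<bar> \<le> C"
  shows "\<bar>\<Sum>s'\<in>UNIV. P a s s' * x s'\<bar> \<le> C"
proof -
  have "\<bar>\<Sum>s'\<in>UNIV. P a s s' * x s'\<bar> \<le> (\<Sum>s'\<in>UNIV. \<bar>P a s s' * x s'\<bar>)" by (rule sum_abs)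
  also have "\<dots> \<le> (\<Sum>s'\<in>UNIV. P a s s' * C)"
    using assms unfolding stochastic_def by (intro sum_mono) (simp add: abs_mult mult_left_mono)
  also have "\<dots> = C" using assms(1) unfolding stochastic_def by (simp add: sum_distrib_right[symmetric])
  finally show ?thesis .
qed

lemma wsum_bound:
  fixes \<mu> :: "'s::finite \<Rightarrow> real"
  assumes "\<And>s. \<bar>x s\<bar> \<le> C"
  shows "\<bar>\<Sum>s\<in>UNIV. \<mu> s * x s\<bar> \<le> (\<Sum>s\<in>UNIV. \<bar>\<mu> s\<bar>) * C"
proof -
  have "\<bar>\<Sum>s\<in>UNIV. \<mu> s * x s\<bar> \<le> (\<Sum>s\<in>UNIV. \<bar>\<mu> s * x s\<bar>)" by (rule sum_abs)
  also have "\<dots> \<le> (\<Sum>s\<in>UNIV. \<bar>\<mu> s\<bar> * C)"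
    using assms by (intro sum_mono) (simp add: abs_mult mult_left_mono)
  also have "\<dots> = (\<Sum>s\<in>UNIV. \<bar>\<mu> s\<bar>) * C" by (simp add: sum_distrib_right)
  finally show ?thesis .
qed

lemma shift_series:
  fixes \<gamma> \<beta> :: real
  assumes "0 \<le> \<gamma>" "\<gamma> < 1" "\<And>t. \<bar>A t\<bar> \<le> C" "\<And>t. \<bar>B t\<bar> \<le> C"
  shows "(\<Sum>t. \<gamma>^t * (case t of 0 \<Rightarrow> A 0 | Suc n \<Rightarrow> A (Suc n) - \<beta> * B n))
       = (\<Sum>t. \<gamma>^t * (A t - \<gamma> * \<beta> * B t))"
proof -
  define p where "p t = (case t of 0 \<Rightarrow> A 0 | Suc n \<Rightarrow> A (Suc n) - \<beta> * B n)" for t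
  have pb: "\<bar>p t\<bar> \<le> C + \<bar>\<beta>\<bar> * C" for t
  proof (cases t)
    case 0 then show ?thesis using assms(3)[of 0] assms(4)[of 0] by (simp add: p_def) (smt (verit) abs_ge_zero mult_nonneg_nonneg)
  next
    case (Suc n)
    have "\<bar>\<beta> * B n\<bar> \<le> \<bar>\<beta>\<bar> * C" using assms(4)[of n] by (simp add: abs_mult mult_left_mono)
    then show ?thesis using Suc assms(3)[of "Suc n"] by (simp add: p_def)
  qed
  have sA: "summable (\<lambda>t. \<gamma>^t * A t)" by (rule geo_summable[OF assms(1,2,3)])
  have sB: "summable (\<lambda>t. \<gamma>^t * B t)" by (rule geo_summable[OF assms(1,2,4)])
  have sp: "summable (\<lambda>t. \<gamma>^t * p t)" by (rule geo_summable[OF assms(1,2) pb])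
  have "(\<Sum>t. \<gamma>^t * p t) = (\<Sum>t. \<gamma>^(Suc t) * p (Suc t)) + p 0"
    using suminf_split_head[OF sp] by simp
  also have "(\<Sum>t. \<gamma>^(Suc t) * p (Suc t)) = (\<Sum>t. \<gamma>^(Suc t) * A (Suc t) - \<gamma> * \<beta> * (\<gamma>^t * B t))"
    by (simp add: p_def algebra_simps)
  also have "\<dots> = (\<Sum>t. \<gamma>^(Suc t) * A (Suc t)) - (\<Sum>t. \<gamma> * \<beta> * (\<gamma>^t * B t))"
    using summable_Suc_iff[THEN iffD2, OF sA] sB
    by (intro suminf_diff[symmetric]) (auto intro: summable_mult)
  also have "(\<Sum>t. \<gamma>^(Suc t) * A (Suc t)) = (\<Sum>t. \<gamma>^t * A t) - A 0"
    using suminf_split_head[OF sA] by simp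
  also have "(\<Sum>t. \<gamma> * \<beta> * (\<gamma>^t * B t)) = \<gamma> * \<beta> * (\<Sum>t. \<gamma>^t * B t)"
    by (rule suminf_mult[OF sB])
  finally have "(\<Sum>t. \<gamma>^t * p t) = (\<Sum>t. \<gamma>^t * A t) - \<gamma> * \<beta> * (\<Sum>t. \<gamma>^t * B t)"
    by (simp add: p_def)
  also have "\<dots> = (\<Sum>t. \<gamma>^t * A t - \<gamma> * \<beta> * (\<gamma>^t * B t))"
    using suminf_mult[OF sB, of "\<gamma> * \<beta>"] suminf_diff[OF sA summable_mult[OF sB, of "\<gamma> * \<beta>"]] by simp
  also have "\<dots> = (\<Sum>t. \<gamma>^t * (A t - \<gamma> * \<beta> * B t))" by (simp add: algebra_simps)
  finally show ?thesis by (simp add: p_def)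
qed



fun gv :: "('a \<Rightarrow> 's::finite \<Rightarrow> 's \<Rightarrow> real) \<Rightarrow> ('s obs_hist \<Rightarrow> 'a \<times> ('s \<Rightarrow> bool))
     \<Rightarrow> ('a \<times> ('s \<Rightarrow> bool) \<Rightarrow> 's \<Rightarrow> real) \<Rightarrow> nat \<Rightarrow> 's obs_hist \<Rightarrow> 's \<Rightarrow> real" where
  "gv P \<pi> f 0 h s = f (\<pi> h) s"
| "gv P \<pi> f (Suc t) h s =
     (\<Sum>s'\<in>UNIV. P (fst (\<pi> h)) s s' * gv P \<pi> f t (h @ [obs_of (snd (\<pi> h) s') s']) s')"

lemma pomdp_val_gv: "pomdp_val P r \<gamma> \<beta> \<pi> t h s = gv P \<pi> (\<lambda>ac s. rhat P r \<gamma> \<beta> s ac) t h s"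
  by (induction t arbitrary: h s) (auto simp: split_def Let_def)

lemma gv_lin: "gv P \<pi> (\<lambda>ac s. f1 ac s - k * f2 ac s) t h s = gv P \<pi> f1 t h s - k * gv P \<pi> f2 t h s"
proof (induction t arbitrary: h s)
  case (Suc t)
  show ?case by (simp only: gv.simps Suc.IH) (simp add: right_diff_distrib sum_subtractf sum_distrib_left mult.left_commute)
qed simp

lemma gv_bound: "stochastic P \<Longrightarrow> (\<And>ac s. \<bar>f ac s\<bar> \<le> C) \<Longrightarrow> \<bar>gv P \<pi> f t h s\<bar> \<le> C"
  by (induction t arbitrary: h s) (auto intro!: avg_bound)

definition f1 :: "('a \<Rightarrow> 's::finite \<Rightarrow> 's \<Rightarrow> real) \<Rightarrow> ('s \<Rightarrow> 'a \<Rightarrow> 's \<Rightarrow> real) \<Rightarrow> 'a \<times> ('s \<Rightarrow> bool) \<Rightarrow> 's \<Rightarrow> real" where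
  "f1 P r ac s = (\<Sum>s'\<in>UNIV. P (fst ac) s s' * r s (fst ac) s')"
definition f2 :: "('a \<Rightarrow> 's::finite \<Rightarrow> 's \<Rightarrow> real) \<Rightarrow> 'a \<times> ('s \<Rightarrow> bool) \<Rightarrow> 's \<Rightarrow> real" where
  "f2 P ac s = (\<Sum>s'\<in>UNIV. P (fst ac) s s' * (if snd ac s' then 1 else 0))"

lemma rhat_split: "rhat P r \<gamma> \<beta> s ac = f1 P r ac s - \<gamma> * \<beta> * f2 P ac s"
  unfolding rhat_def f1_def f2_def by (simp add: sum_subtractf sum_distrib_left algebra_simps)

fun ce :: "('a \<Rightarrow> 's::finite \<Rightarrow> 's \<Rightarrow> real) \<Rightarrow> ('s obs_hist \<Rightarrow> 's \<Rightarrow> bool) \<Rightarrow> ('s obs_hist \<Rightarrow> 'a)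
    \<Rightarrow> nat \<Rightarrow> 's obs_hist \<Rightarrow> 's \<Rightarrow> real" where
  "ce P enc dec 0 h s = (if enc h s then 1 else 0)"
| "ce P enc dec (Suc t) h s = (let h' = h @ [obs_of (enc h s) s] in
      (\<Sum>s'\<in>UNIV. P (dec h') s s' * ce P enc dec t h' s'))"

lemma claimA: "push_val_from P r \<beta> enc dec t h s =
   gv P (join_policy enc dec) (f1 P r) t (h @ [obs_of (enc h s) s]) s - \<beta> * ce P enc dec t h s"
proof (induction t arbitrary: h s)
  case 0 then show ?case by (simp add: Let_def join_policy_def f1_def)
next
  case (Suc t)
  show ?case
    by (simp only: push_val_from.simps Let_def Suc.IH)
       (simp add: Let_def join_policy_def right_diff_distrib sum_subtractf sum_distrib_left mult.left_commute)
qed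

lemma claimB: "gv P (join_policy enc dec) (f2 P) t h s = (\<Sum>s'\<in>UNIV. P (dec h) s s' * ce P enc dec t h s')"
  by (induction t arbitrary: h s) (auto simp: join_policy_def f2_def Let_def)

lemma push_val_gv: "push_val P r \<beta> enc dec t s =
   (case t of 0 \<Rightarrow> gv P (join_policy enc dec) (f1 P r) 0 [] s
    | Suc n \<Rightarrow> gv P (join_policy enc dec) (f1 P r) (Suc n) [] s - \<beta> * gv P (join_policy enc dec) (f2 P) n [] s)"
proof (cases t)
  case 0 then show ?thesis by (simp add: join_policy_def f1_def)
next
  case (Suc n)
  then show ?thesis
    by (simp only: push_val.simps claimA claimB nat.case)
       (simp add: Let_def join_policy_def right_diff_distrib sum_subtractf sum_distrib_left mult.left_commute)
qed



locale pm =
  fixes P :: "'a::finite \<Rightarrow> 's::finite \<Rightarrow> 's \<Rightarrow> real" and r :: "'s \<Rightarrow> 'a \<Rightarrow> 's \<Rightarrow> real"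
    and \<gamma> \<beta> :: real
  assumes stoch: "stochastic P" and g0: "0 \<le> \<gamma>" and g1: "\<gamma> < 1"
begin

definition Kr where "Kr = Max (range (\<lambda>(s,a,s'). \<bar>r s a s'\<bar>))"

lemma Kr: "\<bar>r s a s'\<bar> \<le> Kr"
  unfolding Kr_def by (rule Max_ge) (auto intro!: image_eqI[of _ _ "(s,a,s')"])

lemma f1_bound: "\<bar>f1 P r ac s\<bar> \<le> Kr"
  unfolding f1_def by (rule avg_bound[OF stoch]) (rule Kr)

lemma f2_bound: "\<bar>f2 P ac s\<bar> \<le> 1"
  unfolding f2_def by (rule avg_bound[OF stoch]) simp

definition K where "K = Kr + \<bar>\<gamma> * \<beta>\<bar>"

lemma rhat_bound: "\<bar>rhat P r \<gamma> \<beta> s ac\<bar> \<le> K"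
  unfolding rhat_def K_def
proof (rule avg_bound[OF stoch])
  fix s'
  have "\<bar>\<gamma> * \<beta> * (if snd ac s' then 1 else 0)\<bar> \<le> \<bar>\<gamma> * \<beta>\<bar>" by (simp add: abs_mult)
  then show "\<bar>r s (fst ac) s' - \<gamma> * \<beta> * (if snd ac s' then 1 else 0)\<bar> \<le> Kr + \<bar>\<gamma> * \<beta>\<bar>"
    using Kr[of s "fst ac" s'] by linarith
qed

lemma pv_bound: "\<bar>pomdp_val P r \<gamma> \<beta> \<pi> t h s\<bar> \<le> K"
  unfolding pomdp_val_gv by (rule gv_bound[OF stoch rhat_bound])

lemma part1: "pomdp_objective P r \<gamma> \<beta> \<mu> (join_policy enc dec) = push_objective P r \<gamma> \<beta> \<mu> enc dec"
proof -
  define A where "A t = (\<Sum>s\<in>UNIV. \<mu> s * gv P (join_policy enc dec) (f1 P r) t [] s)" for t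
  define B where "B t = (\<Sum>s\<in>UNIV. \<mu> s * gv P (join_policy enc dec) (f2 P) t [] s)" for t
  define C where "C = (\<Sum>s\<in>UNIV. \<bar>\<mu> s\<bar>) * max Kr 1"
  have Ab: "\<bar>A t\<bar> \<le> C" for t unfolding A_def C_def
    by (rule wsum_bound) (rule order_trans[OF gv_bound[OF stoch f1_bound]], simp)
  have Bb: "\<bar>B t\<bar> \<le> C" for t unfolding B_def C_def
    by (rule wsum_bound) (rule order_trans[OF gv_bound[OF stoch f2_bound]], simp)
  have "pomdp_objective P r \<gamma> \<beta> \<mu> (join_policy enc dec) = (\<Sum>t. \<gamma>^t * (A t - \<gamma> * \<beta> * B t))"
    unfolding pomdp_objective_def A_def B_def pomdp_val_gv rhat_split gv_lin
    by (simp add: right_diff_distrib sum_subtractf sum_distrib_left mult.left_commute)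
  also have "\<dots> = (\<Sum>t. \<gamma>^t * (case t of 0 \<Rightarrow> A 0 | Suc n \<Rightarrow> A (Suc n) - \<beta> * B n))"
    by (rule shift_series[OF g0 g1 Ab Bb, symmetric])
  also have "\<dots> = push_objective P r \<gamma> \<beta> \<mu> enc dec"
    unfolding push_objective_def
  proof (rule arg_cong[where f=suminf], rule ext)
    fix t show "\<gamma>^t * (case t of 0 \<Rightarrow> A 0 | Suc n \<Rightarrow> A (Suc n) - \<beta> * B n) =
       \<gamma>^t * (\<Sum>s\<in>UNIV. \<mu> s * push_val P r \<beta> enc dec t s)"
      by (cases t) (simp_all only: push_val_gv A_def B_def nat.case,
          simp_all add: right_diff_distrib sum_subtractf sum_distrib_left mult.left_commute)
  qed
  finally show ?thesis .
qed

lemma join_split: "join_policy (split_enc \<pi>) (split_dec \<pi>) = \<pi>"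
  by (simp add: join_policy_def split_enc_def split_dec_def)

end


context pm begin

abbreviation obj where "obj \<pi> \<mu> \<equiv> pomdp_objective P r \<gamma> \<beta> \<mu> \<pi>"
abbreviation pv where "pv \<equiv> pomdp_val P r \<gamma> \<beta>"

definition sh :: "('s obs_hist \<Rightarrow> 'a \<times> ('s \<Rightarrow> bool)) \<Rightarrow> 's option \<Rightarrow> ('s obs_hist \<Rightarrow> 'a \<times> ('s \<Rightarrow> bool))"
  where "sh \<pi> ob = (\<lambda>h. \<pi> (ob # h))"
definition dl :: "'s \<Rightarrow> 's \<Rightarrow> real" where "dl s' = (\<lambda>x. if x = s' then 1 else 0)"
definition nu :: "'a \<Rightarrow> ('s \<Rightarrow> real) \<Rightarrow> 's \<Rightarrow> real" where "nu a \<mu> s' = (\<Sum>s\<in>UNIV. \<mu> s * P a s s')"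
definition qN :: "'a \<Rightarrow> ('s \<Rightarrow> bool) \<Rightarrow> ('s \<Rightarrow> real) \<Rightarrow> 's \<Rightarrow> real"
  where "qN a c \<mu> s' = nu a \<mu> s' * (if c s' then 0 else 1)"
definition Rb where "Rb \<mu> ac = (\<Sum>s\<in>UNIV. \<mu> s * rhat P r \<gamma> \<beta> s ac)"

lemma pv_append: "pv \<pi> t (h0 @ h) s = pv (\<lambda>h'. \<pi> (h0 @ h')) t h s"
  by (induction t arbitrary: h s) (auto simp: split_def Let_def)

lemma summ_w: "summable (\<lambda>t. \<gamma>^t * (\<Sum>x\<in>UNIV. w x * pv \<pi> t h x))"
  by (rule geo_summable[OF g0 g1]) (rule wsum_bound, rule pv_bound)

lemma obj_bound: "\<bar>obj \<pi> \<mu>\<bar> \<le> (\<Sum>s\<in>UNIV. \<bar>\<mu> s\<bar>) * K / (1 - \<gamma>)"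
  unfolding pomdp_objective_def
  by (rule geo_bound[OF g0 g1]) (rule wsum_bound, rule pv_bound)

lemma dl_sum: "(\<Sum>x\<in>UNIV. dl s' x * f x) = f s'"
proof -
  have "(\<lambda>x. dl s' x * f x) = (\<lambda>x. if x = s' then f x else 0)" by (auto simp: dl_def)
  then show ?thesis by (simp only: \<open>(\<lambda>x. dl s' x * f x) = _\<close>) simp
qed

lemma step_sum:
  assumes "\<pi> [] = (a, c)"
  shows "(\<Sum>s\<in>UNIV. \<mu> s * pv \<pi> (Suc t) [] s) =
    (\<Sum>s'\<in>UNIV. if c s' then nu a \<mu> s' * (\<Sum>x\<in>UNIV. dl s' x * pv (sh \<pi> (Some s')) t [] x) else 0)
    + (\<Sum>x\<in>UNIV. qN a c \<mu> x * pv (sh \<pi> None) t [] x)"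
proof -
  have e: "pv \<pi> t [ob] s' = pv (sh \<pi> ob) t [] s'" for ob s'
    using pv_append[of \<pi> t "[ob]" "[]" s'] by (simp add: sh_def)
  have "(\<Sum>s\<in>UNIV. \<mu> s * pv \<pi> (Suc t) [] s) =
     (\<Sum>s\<in>UNIV. \<Sum>s'\<in>UNIV. \<mu> s * P a s s' * pv (sh \<pi> (obs_of (c s') s')) t [] s')"
    using assms by (simp add: e sum_distrib_left mult.assoc)
  also have "\<dots> = (\<Sum>s'\<in>UNIV. nu a \<mu> s' * pv (sh \<pi> (obs_of (c s') s')) t [] s')"
    by (subst sum.swap) (simp add: nu_def sum_distrib_right)
  also have "\<dots> = (\<Sum>s'\<in>UNIV. (if c s' then nu a \<mu> s' * (\<Sum>x\<in>UNIV. dl s' x * pv (sh \<pi> (Some s')) t [] x) else 0)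
       + qN a c \<mu> s' * pv (sh \<pi> None) t [] s')"
    by (rule sum.cong) (auto simp: dl_sum qN_def obs_of_def)
  finally show ?thesis by (simp add: sum.distrib)
qed

lemma obj_rec:
  assumes "\<pi> [] = (a, c)"
  shows "obj \<pi> \<mu> = Rb \<mu> (a, c) + \<gamma> * ((\<Sum>s'\<in>UNIV. if c s' then nu a \<mu> s' * obj (sh \<pi> (Some s')) (dl s') else 0)
     + obj (sh \<pi> None) (qN a c \<mu>))"
proof -
  define F where "F t = (\<Sum>s\<in>UNIV. \<mu> s * pv \<pi> t [] s)" for t
  define G where "G s' t = (\<Sum>x\<in>UNIV. dl s' x * pv (sh \<pi> (Some s')) t [] x)" for s' t
  define H where "H t = (\<Sum>x\<in>UNIV. qN a c \<mu> x * pv (sh \<pi> None) t [] x)" for t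
  have sF: "summable (\<lambda>t. \<gamma>^t * F t)" unfolding F_def by (rule summ_w)
  have sG: "summable (\<lambda>t. \<gamma>^t * G s' t)" for s' unfolding G_def by (rule summ_w)
  have sH: "summable (\<lambda>t. \<gamma>^t * H t)" unfolding H_def by (rule summ_w)
  have sG': "summable (\<lambda>t. \<gamma>^t * (if c s' then nu a \<mu> s' * G s' t else 0))" for s'
    using summable_mult[OF sG[of s'], of "nu a \<mu> s'"] by (cases "c s'") (simp_all add: mult.left_commute)
  have F0: "F 0 = Rb \<mu> (a, c)" unfolding F_def Rb_def using assms by simp
  have FS: "F (Suc t) = (\<Sum>s'\<in>UNIV. if c s' then nu a \<mu> s' * G s' t else 0) + H t" for t
    unfolding F_def G_def H_def by (rule step_sum[where \<pi>=\<pi> and a=a and c=c, OF assms])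
  have "obj \<pi> \<mu> = (\<Sum>t. \<gamma>^t * F t)" unfolding pomdp_objective_def F_def ..
  also have "\<dots> = F 0 + (\<Sum>t. \<gamma>^(Suc t) * F (Suc t))"
    using suminf_split_head[OF sF] by simp
  also have "(\<Sum>t. \<gamma>^(Suc t) * F (Suc t)) = \<gamma> * (\<Sum>t. \<gamma>^t * F (Suc t))"
  proof -
    have Fb: "\<bar>F t\<bar> \<le> (\<Sum>s\<in>UNIV. \<bar>\<mu> s\<bar>) * K" for t
      unfolding F_def by (rule wsum_bound, rule pv_bound)
    have "summable (\<lambda>t. \<gamma>^t * F (Suc t))" by (rule geo_summable[OF g0 g1 Fb])
    from suminf_mult[OF this, of \<gamma>] show ?thesis by (simp add: mult.assoc)
  qed
  also have "(\<Sum>t. \<gamma>^t * F (Suc t)) =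
      (\<Sum>t. (\<Sum>s'\<in>UNIV. \<gamma>^t * (if c s' then nu a \<mu> s' * G s' t else 0)) + \<gamma>^t * H t)"
    by (simp add: FS distrib_left sum_distrib_left)
  also have "\<dots> = (\<Sum>t. \<Sum>s'\<in>UNIV. \<gamma>^t * (if c s' then nu a \<mu> s' * G s' t else 0)) + (\<Sum>t. \<gamma>^t * H t)"
    by (rule suminf_add[symmetric]) (auto intro!: summable_sum sG' sH)
  also have "(\<Sum>t. \<Sum>s'\<in>UNIV. \<gamma>^t * (if c s' then nu a \<mu> s' * G s' t else 0))
      = (\<Sum>s'\<in>UNIV. \<Sum>t. \<gamma>^t * (if c s' then nu a \<mu> s' * G s' t else 0))"
    by (rule suminf_sum) (rule sG')
  also have "\<dots> = (\<Sum>s'\<in>UNIV. if c s' then nu a \<mu> s' * obj (sh \<pi> (Some s')) (dl s') else 0)"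
  proof (rule sum.cong[OF refl])
    fix s'
    show "(\<Sum>t. \<gamma>^t * (if c s' then nu a \<mu> s' * G s' t else 0)) =
       (if c s' then nu a \<mu> s' * obj (sh \<pi> (Some s')) (dl s') else 0)"
      using suminf_mult[OF sG[of s'], of "nu a \<mu> s'"]
      by (cases "c s'") (simp_all add: mult.left_commute pomdp_objective_def G_def)
  qed
  also have "(\<Sum>t. \<gamma>^t * H t) = obj (sh \<pi> None) (qN a c \<mu>)"
    unfolding pomdp_objective_def H_def ..
  finally show ?thesis using F0 by simp
qed

end


context pm begin

definition Vs :: "('s \<Rightarrow> real) \<Rightarrow> real" where "Vs \<mu> = (SUP \<pi>. obj \<pi> \<mu>)"

lemma bdd: "bdd_above (range (\<lambda>\<pi>. obj \<pi> \<mu>))"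
  by (rule bdd_aboveI2[where M="(\<Sum>s\<in>UNIV. \<bar>\<mu> s\<bar>) * K / (1 - \<gamma>)"])
     (rule abs_le_D1[OF obj_bound])

lemma obj_le_Vs: "obj \<pi> \<mu> \<le> Vs \<mu>"
  unfolding Vs_def by (rule cSUP_upper[OF UNIV_I bdd])

lemma Vs_le: "Vs \<mu> \<le> (\<Sum>s\<in>UNIV. \<bar>\<mu> s\<bar>) * K / (1 - \<gamma>)"
  unfolding Vs_def by (rule cSUP_least) (simp, rule abs_le_D1[OF obj_bound])

lemma obj_scale: "obj \<pi> (\<lambda>s. z * x s) = z * obj \<pi> x"
proof -
  have "obj \<pi> (\<lambda>s. z * x s) = (\<Sum>t. z * (\<gamma>^t * (\<Sum>s\<in>UNIV. x s * pv \<pi> t [] s)))"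
    unfolding pomdp_objective_def by (simp add: sum_distrib_left mult.assoc mult.left_commute)
  also have "\<dots> = z * obj \<pi> x" unfolding pomdp_objective_def by (rule suminf_mult[OF summ_w])
  finally show ?thesis .
qed

lemma Vs_scale: "0 \<le> z \<Longrightarrow> Vs (\<lambda>s. z * x s) \<le> z * Vs x"
  unfolding Vs_def[of "\<lambda>s. z * x s"]
  by (rule cSUP_least) (simp, simp only: obj_scale, rule mult_left_mono[OF obj_le_Vs], assumption)

definition Q where
  "Q \<mu> ac = Rb \<mu> ac + \<gamma> * ((\<Sum>s'\<in>UNIV. if snd ac s' then nu (fst ac) \<mu> s' * Vs (dl s') else 0)
      + Vs (qN (fst ac) (snd ac) \<mu>))"

definition g where "g \<omega> = (SOME ac. \<forall>b. Q \<omega> b \<le> Q \<omega> ac)"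

lemma g_max: "Q \<omega> b \<le> Q \<omega> (g \<omega>)"
proof -
  have "\<exists>ac. \<forall>b. Q \<omega> b \<le> Q \<omega> ac"
  proof -
    have "Max (range (Q \<omega>)) \<in> range (Q \<omega>)" by (rule Max_in) auto
    then obtain ac where "Q \<omega> ac = Max (range (Q \<omega>))" by (metis rangeE)
    moreover have "Q \<omega> b \<le> Max (range (Q \<omega>))" for b by (rule Max_ge) auto
    ultimately have "\<forall>b. Q \<omega> b \<le> Q \<omega> ac" by simp
    then show ?thesis by blast
  qed
  then have "\<forall>b. Q \<omega> b \<le> Q \<omega> (g \<omega>)" unfolding g_def by (rule someI_ex)
  then show ?thesis by blast
qed

lemma Pnn: "0 \<le> P a s s'" using stoch unfolding stochastic_def by blast

lemma nu_nn: "(\<And>s. 0 \<le> \<omega> s) \<Longrightarrow> 0 \<le> nu a \<omega> s'"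
  unfolding nu_def by (intro sum_nonneg) (simp add: Pnn)

lemma Vs_le_Q:
  assumes "\<And>s. 0 \<le> \<omega> s"
  shows "Vs \<omega> \<le> Q \<omega> (g \<omega>)"
  unfolding Vs_def
proof (rule cSUP_least)
  fix \<pi> :: "'s obs_hist \<Rightarrow> 'a \<times> ('s \<Rightarrow> bool)"
  obtain a c where ac: "\<pi> [] = (a, c)" by fastforce
  have "obj \<pi> \<omega> \<le> Q \<omega> (a, c)"
    unfolding obj_rec[where \<pi>=\<pi> and a=a and c=c, OF ac] Q_def fst_conv snd_conv
  proof -
    have "(\<Sum>s'\<in>UNIV. if c s' then nu a \<omega> s' * obj (sh \<pi> (Some s')) (dl s') else 0)
        \<le> (\<Sum>s'\<in>UNIV. if c s' then nu a \<omega> s' * Vs (dl s') else 0)"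
    proof (rule sum_mono)
      fix s'
      have "nu a \<omega> s' * obj (sh \<pi> (Some s')) (dl s') \<le> nu a \<omega> s' * Vs (dl s')"
        by (rule mult_left_mono[OF obj_le_Vs nu_nn[OF assms]])
      then show "(if c s' then nu a \<omega> s' * obj (sh \<pi> (Some s')) (dl s') else 0)
          \<le> (if c s' then nu a \<omega> s' * Vs (dl s') else 0)" by simp
    qed
    moreover have "obj (sh \<pi> None) (qN a c \<omega>) \<le> Vs (qN a c \<omega>)" by (rule obj_le_Vs)
    ultimately show "Rb \<omega> (a, c) + \<gamma> * ((\<Sum>s'\<in>UNIV. if c s' then nu a \<omega> s' * obj (sh \<pi> (Some s')) (dl s') else 0)
        + obj (sh \<pi> None) (qN a c \<omega>))
      \<le> Rb \<omega> (a, c) + \<gamma> * ((\<Sum>s'\<in>UNIV. if c s' then nu a \<omega> s' * Vs (dl s') else 0) + Vs (qN a c \<omega>))"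
      by (rule add_left_mono[OF mult_left_mono[OF add_mono g0]])
  qed
  also have "\<dots> \<le> Q \<omega> (g \<omega>)" by (rule g_max)
  finally show "obj \<pi> \<omega> \<le> Q \<omega> (g \<omega>)" .
qed simp

abbreviation bp where "bp \<omega> \<equiv> belief_policy P \<omega> g"

lemma bp_nil: "bp \<omega> [] = g \<omega>"
  by (simp add: belief_policy_def belief_of_def)

lemma bp_sh: "sh (bp \<omega>) ob = bp (belief_update P \<omega> (g \<omega>) ob)"
  by (simp add: sh_def belief_policy_def belief_of_def)

lemma update_Some: "belief_update P \<omega> ac (Some s') = dl s'"
  by (simp add: belief_update_def dl_def)

lemma update_None: "belief_update P \<omega> (a, c) None = (\<lambda>s'. qN a c \<omega> s' / (\<Sum>x\<in>UNIV. qN a c \<omega> x))"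
  by (simp add: belief_update_def qN_def nu_def Let_def)

definition Dg where "Dg \<omega> = Vs \<omega> - obj (bp \<omega>) \<omega>"
definition S where "S = (SUP \<omega>\<in>belief_simplex. Dg \<omega>)"

lemma simplex_sum: "\<omega> \<in> belief_simplex \<Longrightarrow> (\<Sum>s\<in>UNIV. \<bar>\<omega> s\<bar>) = 1"
  unfolding belief_simplex_def by simp

lemma bddS: "bdd_above (Dg ` belief_simplex)"
proof (rule bdd_aboveI2[where M="2 * K / (1 - \<gamma>)"])
  fix \<omega> :: "'s \<Rightarrow> real" assume w: "\<omega> \<in> belief_simplex"
  have "Vs \<omega> \<le> K / (1 - \<gamma>)" using Vs_le[of \<omega>] simplex_sum[OF w] by simp
  moreover have "- obj (bp \<omega>) \<omega> \<le> K / (1 - \<gamma>)"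
    using obj_bound[where \<pi>="bp \<omega>" and \<mu>=\<omega>] simplex_sum[OF w] by simp
  ultimately show "Dg \<omega> \<le> 2 * K / (1 - \<gamma>)" unfolding Dg_def by simp
qed

lemma dl_simplex: "dl s \<in> belief_simplex"
  unfolding belief_simplex_def dl_def by simp

lemma Dg_le_S: "\<omega> \<in> belief_simplex \<Longrightarrow> Dg \<omega> \<le> S"
  unfolding S_def by (rule cSUP_upper[OF _ bddS])

lemma nu_sum: "\<omega> \<in> belief_simplex \<Longrightarrow> (\<Sum>s'\<in>UNIV. nu a \<omega> s') = 1"
  using stoch unfolding nu_def belief_simplex_def stochastic_def
  by (subst sum.swap) (simp add: sum_distrib_left[symmetric])

lemma alg_aux: "((R::real) + k * (A + B)) - (R + k * (C + E)) = k * ((A - C) + (B - E))"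
  by (simp add: algebra_simps)

lemma last_lemma: assumes z0: "0 \<le> z" and qeq: "q = (\<lambda>s. z * x' s)"
    and xs: "0 < z \<Longrightarrow> x' \<in> belief_simplex"
  shows "Vs q - obj (bp x') q \<le> z * S"
proof -
  have A: "Vs (\<lambda>s. z * x' s) \<le> z * Vs x'" by (rule Vs_scale[OF z0])
  have B: "obj (bp x') (\<lambda>s. z * x' s) = z * obj (bp x') x'" by (rule obj_scale)
  have "Vs (\<lambda>s. z * x' s) - obj (bp x') (\<lambda>s. z * x' s) \<le> z * Dg x'"
    unfolding B Dg_def right_diff_distrib using A by linarith
  then have 1: "Vs q - obj (bp x') q \<le> z * Dg x'" by (simp only: qeq)
  have "z * Dg x' \<le> z * S"
  proof (cases "z = 0")
    case False
    then have zp: "0 < z" using z0 by simp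
    show ?thesis by (rule mult_left_mono[OF Dg_le_S[OF xs[OF zp]] z0])
  qed simp
  with 1 show ?thesis by linarith
qed

lemma D_step:
  assumes w: "\<omega> \<in> belief_simplex"
  shows "Dg \<omega> \<le> \<gamma> * S"
proof -
  obtain a c where ac: "g \<omega> = (a, c)" by fastforce
  have wnn: "\<And>s. 0 \<le> \<omega> s" using w unfolding belief_simplex_def by blast
  define z where "z = (\<Sum>x\<in>UNIV. qN a c \<omega> x)"
  define x' where "x' = (\<lambda>s'. qN a c \<omega> s' / z)"
  have qnn: "0 \<le> qN a c \<omega> s" for s unfolding qN_def using nu_nn[OF wnn] by simp
  have z0: "0 \<le> z" unfolding z_def by (intro sum_nonneg qnn)
  have qeq: "qN a c \<omega> = (\<lambda>s. z * x' s)"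
  proof
    fix s show "qN a c \<omega> s = z * x' s"
    proof (cases "z = 0")
      case True
      then have "qN a c \<omega> s = 0" using sum_nonneg_eq_0_iff[of UNIV "qN a c \<omega>"] qnn unfolding z_def by simp
      then show ?thesis using True by simp
    qed (simp add: x'_def)
  qed
  have x'u: "belief_update P \<omega> (g \<omega>) None = x'" unfolding ac update_None x'_def z_def ..
  have rec: "obj (bp \<omega>) \<omega> = Rb \<omega> (a, c) + \<gamma> * ((\<Sum>s'\<in>UNIV. if c s' then nu a \<omega> s' * obj (bp (dl s')) (dl s') else 0)
     + obj (bp x') (qN a c \<omega>))"
  proof -
    have e1: "sh (bp \<omega>) (Some s') = bp (dl s')" for s' using bp_sh update_Some by simp
    have e2: "sh (bp \<omega>) None = bp x'" using bp_sh x'u by simp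
    show ?thesis using obj_rec[of "bp \<omega>" a c \<omega>] by (simp only: bp_nil ac e1 e2 simp_thms)
  qed
  have VQ: "Vs \<omega> \<le> Q \<omega> (a, c)" using Vs_le_Q[of \<omega>, OF wnn] ac by simp
  have xs: "x' \<in> belief_simplex" if zp: "0 < z"
  proof -
    show ?thesis unfolding belief_simplex_def
    proof (intro CollectI conjI allI)
      fix s show "0 \<le> x' s" unfolding x'_def using zp qnn[of s] by simp
    next
      have "(\<Sum>s\<in>UNIV. x' s) = (\<Sum>s\<in>UNIV. qN a c \<omega> s) / z"
        unfolding x'_def by (rule sum_divide_distrib[symmetric])
      then show "(\<Sum>s\<in>UNIV. x' s) = 1" using zp unfolding z_def[symmetric] by simp
    qed
  qed
  have last: "Vs (qN a c \<omega>) - obj (bp x') (qN a c \<omega>) \<le> z * S"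
    by (rule last_lemma[OF z0 qeq xs])
  have mid: "(\<Sum>s'\<in>UNIV. if c s' then nu a \<omega> s' * Vs (dl s') else 0)
      - (\<Sum>s'\<in>UNIV. if c s' then nu a \<omega> s' * obj (bp (dl s')) (dl s') else 0)
      \<le> (\<Sum>s'\<in>UNIV. if c s' then nu a \<omega> s' * S else 0)"
    unfolding sum_subtractf[symmetric]
  proof (rule sum_mono)
    fix s'
    show "(if c s' then nu a \<omega> s' * Vs (dl s') else 0) - (if c s' then nu a \<omega> s' * obj (bp (dl s')) (dl s') else 0)
       \<le> (if c s' then nu a \<omega> s' * S else 0)"
    proof (cases "c s'")
      case True
      have "nu a \<omega> s' * Dg (dl s') \<le> nu a \<omega> s' * S"
        by (rule mult_left_mono[OF Dg_le_S[OF dl_simplex] nu_nn[OF wnn]])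
      then show ?thesis using True unfolding Dg_def right_diff_distrib by simp
    qed simp
  qed
  have tot: "(\<Sum>s'\<in>UNIV. if c s' then nu a \<omega> s' * S else 0) + z * S = S"
  proof -
    have "(\<Sum>s'\<in>UNIV. if c s' then nu a \<omega> s' * S else 0) + z * S
        = (\<Sum>s'\<in>UNIV. (if c s' then nu a \<omega> s' else 0) + qN a c \<omega> s') * S"
      unfolding z_def sum_distrib_right sum.distrib[symmetric] by (rule sum.cong) (auto simp: distrib_right)
    also have "\<dots> = (\<Sum>s'\<in>UNIV. nu a \<omega> s') * S"
      by (intro arg_cong[where f="\<lambda>x. x * S"] sum.cong) (auto simp: qN_def)
    finally show ?thesis using nu_sum[OF w] by simp
  qed
  have "Dg \<omega> \<le> Q \<omega> (a, c) - obj (bp \<omega>) \<omega>" unfolding Dg_def using VQ by simp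
  also have "\<dots> = \<gamma> * (((\<Sum>s'\<in>UNIV. if c s' then nu a \<omega> s' * Vs (dl s') else 0)
      - (\<Sum>s'\<in>UNIV. if c s' then nu a \<omega> s' * obj (bp (dl s')) (dl s') else 0))
      + (Vs (qN a c \<omega>) - obj (bp x') (qN a c \<omega>)))"
    unfolding rec Q_def fst_conv snd_conv by (rule alg_aux)
  also have "\<dots> \<le> \<gamma> * ((\<Sum>s'\<in>UNIV. if c s' then nu a \<omega> s' * S else 0) + z * S)"
    by (rule mult_left_mono[OF add_mono[OF mid last] g0])
  also have "\<dots> = \<gamma> * S" using tot by simp
  finally show ?thesis .
qed

lemma S_le0: "S \<le> 0"
proof -
  have ne: "(belief_simplex :: ('s \<Rightarrow> real) set) \<noteq> {}"
    using dl_simplex[of "undefined :: 's"] by auto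
  have h: "(SUP \<omega>\<in>belief_simplex. Dg \<omega>) \<le> \<gamma> * S"
    by (rule cSUP_least[OF ne]) (rule D_step)
  have S1: "S \<le> \<gamma> * S" using h S_def by linarith
  show ?thesis
  proof (rule ccontr)
    assume "\<not> S \<le> 0"
    then have "0 < S" by simp
    from mult_strict_right_mono[OF g1 this] have "\<gamma> * S < S" by simp
    with S1 show False by linarith
  qed
qed

lemma greedy_opt: assumes "\<omega> \<in> belief_simplex" shows "Vs \<omega> \<le> obj (bp \<omega>) \<omega>"
  using Dg_le_S[OF assms] S_le0 unfolding Dg_def by linarith

end

theorem theorem3:
  fixes P :: "'a::finite \<Rightarrow> 's::finite \<Rightarrow> 's \<Rightarrow> real"
    and r :: "'s \<Rightarrow> 'a \<Rightarrow> 's \<Rightarrow> real"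
    and \<gamma> \<beta> :: real
    and \<omega>0 :: "'s \<Rightarrow> real"
  assumes "stochastic P"
    and "0 \<le> \<gamma>" and "\<gamma> < 1"
    and "0 < \<beta>"
    and "\<omega>0 \<in> belief_simplex"
  shows "(\<forall>enc dec. pomdp_objective P r \<gamma> \<beta> \<omega>0 (join_policy enc dec)
                      = push_objective P r \<gamma> \<beta> \<omega>0 enc dec)
       \<and> (\<forall>\<pi>. push_objective P r \<gamma> \<beta> \<omega>0 (split_enc \<pi>) (split_dec \<pi>)
                      = pomdp_objective P r \<gamma> \<beta> \<omega>0 \<pi>)
       \<and> (\<forall>\<pi>s. (\<forall>\<pi>b. pomdp_objective P r \<gamma> \<beta> \<omega>0 (belief_policy P \<omega>0 \<pi>b)
                        \<le> pomdp_objective P r \<gamma> \<beta> \<omega>0 (belief_policy P \<omega>0 \<pi>s))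
              \<longrightarrow> (\<forall>enc dec. push_objective P r \<gamma> \<beta> \<omega>0 enc dec
                        \<le> push_objective P r \<gamma> \<beta> \<omega>0
                             (split_enc (belief_policy P \<omega>0 \<pi>s)) (split_dec (belief_policy P \<omega>0 \<pi>s))))"
proof -
  interpret pm P r \<gamma> \<beta> using assms by unfold_locales
  have p1: "\<forall>enc dec. pomdp_objective P r \<gamma> \<beta> \<omega>0 (join_policy enc dec)
                      = push_objective P r \<gamma> \<beta> \<omega>0 enc dec"
    using part1 by blast
  have p2: "\<forall>\<pi>. push_objective P r \<gamma> \<beta> \<omega>0 (split_enc \<pi>) (split_dec \<pi>)
                      = pomdp_objective P r \<gamma> \<beta> \<omega>0 \<pi>"
    using part1 join_split by metis
  have p3: "(\<forall>\<pi>b. pomdp_objective P r \<gamma> \<beta> \<omega>0 (belief_policy P \<omega>0 \<pi>b)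
                        \<le> pomdp_objective P r \<gamma> \<beta> \<omega>0 (belief_policy P \<omega>0 \<pi>s))
              \<longrightarrow> (\<forall>enc dec. push_objective P r \<gamma> \<beta> \<omega>0 enc dec
                        \<le> push_objective P r \<gamma> \<beta> \<omega>0
                             (split_enc (belief_policy P \<omega>0 \<pi>s)) (split_dec (belief_policy P \<omega>0 \<pi>s)))" for \<pi>s
  proof (intro impI allI)
    fix enc dec
    assume H: "\<forall>\<pi>b. pomdp_objective P r \<gamma> \<beta> \<omega>0 (belief_policy P \<omega>0 \<pi>b)
                        \<le> pomdp_objective P r \<gamma> \<beta> \<omega>0 (belief_policy P \<omega>0 \<pi>s)"
    have "push_objective P r \<gamma> \<beta> \<omega>0 enc dec = pomdp_objective P r \<gamma> \<beta> \<omega>0 (join_policy enc dec)"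
      using part1 by simp
    also have "\<dots> \<le> Vs \<omega>0" by (rule obj_le_Vs)
    also have "\<dots> \<le> pomdp_objective P r \<gamma> \<beta> \<omega>0 (belief_policy P \<omega>0 g)"
      by (rule greedy_opt[OF assms(5)])
    also have "\<dots> \<le> pomdp_objective P r \<gamma> \<beta> \<omega>0 (belief_policy P \<omega>0 \<pi>s)" using H by blast
    also have "\<dots> = push_objective P r \<gamma> \<beta> \<omega>0
                             (split_enc (belief_policy P \<omega>0 \<pi>s)) (split_dec (belief_policy P \<omega>0 \<pi>s))"
      using p2 by simp
    finally show "push_objective P r \<gamma> \<beta> \<omega>0 enc dec
                        \<le> push_objective P r \<gamma> \<beta> \<omega>0
                             (split_enc (belief_policy P \<omega>0 \<pi>s)) (split_dec (belief_policy P \<omega>0 \<pi>s))" .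
  qed
  show ?thesis using p1 p2 p3 by blast
qed

end
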